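(* Let Assumption A hold with (H2), let $T>0$ and let $(\varphi,\psi)$ solve the Schrödinger system. Then $\kappa_\psi(r)\ge\alpha_\nu-\frac1T-r^{-1}f_L(r)$ for all $r>0$.
   Context: $\kappa_U(r)=\inf\{|x-y|^{-2}\langle\nabla U(x)-\nabla U(y),x-y\rangle:|x-y|=r\}$, $r>0$. $f_L(r)=2L^{1/2}\tanh(rL^{1/2}/2)$. $P_tg(x)=(2\pi t)^{-d/2}\int g(y)e^{-|y-x|^2/(2t)}\mathrm{d}y$. Assumption A with (H2): $\mu(\mathrm{d}x)=e^{-U^\mu}\mathrm{d}x$, $\nu(\mathrm{d}y)=e^{-U^\nu}\mathrm{d}y$ probability measures on $\mathbb{R}^d$, $U^\mu,U^\nu\in C^2$; $\mu$ has finite second moment and finite entropy w.r.t. Lebesgue; $\langle v,\nabla^2U^\mu(x)v\rangle\le\beta_\mu|v|^2$ for all $x,v$, some $\beta_\mu>0$; there exist $\alpha_\nu>0,L>0$ with $\kappa_{U^\nu}(r)\ge\alpha_\nu-r^{-1}f_L(r)$ for all $r>0$. Schrödinger system: $\varphi=U^\mu+\log P_Te^{-\psi}$, $\psi=U^\nu+\log P_Te^{-\varphi}$. *)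

theory Defs
  imports "HOL-Analysis.Analysis"
begin

definition C2 :: "('a::euclidean_space \<Rightarrow> real) \<Rightarrow> bool" where
  "C2 U \<longleftrightarrow> (\<exists>(DU :: 'a \<Rightarrow> ('a \<Rightarrow>\<^sub>L real)) (D2U :: 'a \<Rightarrow> ('a \<Rightarrow>\<^sub>L ('a \<Rightarrow>\<^sub>L real))).
      (\<forall>x. (U has_derivative blinfun_apply (DU x)) (at x)) \<and>
      (\<forall>x. (DU has_derivative blinfun_apply (D2U x)) (at x)) \<and>
      continuous_on UNIV D2U)"

definition hessian_upper_bound :: "('a::euclidean_space \<Rightarrow> real) \<Rightarrow> real \<Rightarrow> bool" where
  "hessian_upper_bound U \<beta> \<longleftrightarrow>
     (\<forall>(DU :: 'a \<Rightarrow> ('a \<Rightarrow>\<^sub>L real)) (D2U :: 'a \<Rightarrow> ('a \<Rightarrow>\<^sub>L ('a \<Rightarrow>\<^sub>L real))).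
      (\<forall>x. (U has_derivative blinfun_apply (DU x)) (at x)) \<longrightarrow>
      (\<forall>x. (DU has_derivative blinfun_apply (D2U x)) (at x)) \<longrightarrow>
      (\<forall>x v. blinfun_apply (blinfun_apply (D2U x) v) v \<le> \<beta> * (norm v)\<^sup>2))"

text \<open>kappa_U(r) = inf { |x-y|^-2 <grad U(x) - grad U(y), x-y> : |x-y| = r },
  with <grad U(x), h> written as the Frechet derivative of U at x applied to h.
  The infimum is taken in the extended reals.\<close>
definition kappa :: "('a::euclidean_space \<Rightarrow> real) \<Rightarrow> real \<Rightarrow> ereal" where
  "kappa U r = (INF p \<in> {(x, y). norm (x - y) = r}.
      ereal ((frechet_derivative U (at (fst p)) (fst p - snd p)
              - frechet_derivative U (at (snd p)) (fst p - snd p))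
             / (norm (fst p - snd p))\<^sup>2))"

definition fL :: "real \<Rightarrow> real \<Rightarrow> real" where
  "fL L r = 2 * sqrt L * tanh (r * sqrt L / 2)"

definition heat :: "real \<Rightarrow> ('a::euclidean_space \<Rightarrow> real) \<Rightarrow> 'a \<Rightarrow> real" where
  "heat t g x = (2 * pi * t) powr (- (real DIM('a) / 2)) *
      (\<integral>y. g y * exp (- (norm (y - x))\<^sup>2 / (2 * t)) \<partial>lborel)"

definition schroedinger_solution ::
  "real \<Rightarrow> ('a::euclidean_space \<Rightarrow> real) \<Rightarrow> ('a \<Rightarrow> real) \<Rightarrow> ('a \<Rightarrow> real) \<Rightarrow> ('a \<Rightarrow> real) \<Rightarrow> bool" where
  "schroedinger_solution T U\<mu> U\<nu> \<phi> \<psi> \<longleftrightarrow>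
     (\<forall>x. integrable lborel (\<lambda>y. exp (- \<psi> y) * exp (- (norm (y - x))\<^sup>2 / (2 * T)))) \<and>
     (\<forall>x. integrable lborel (\<lambda>y. exp (- \<phi> y) * exp (- (norm (y - x))\<^sup>2 / (2 * T)))) \<and>
     (\<forall>x. \<phi> x = U\<mu> x + ln (heat T (\<lambda>y. exp (- \<psi> y)) x)) \<and>
     (\<forall>x. \<psi> x = U\<nu> x + ln (heat T (\<lambda>y. exp (- \<phi> y)) x))"

end

theory Submission
  imports Defs
begin


lemma exists_big_coord:
  fixes y :: "'a::euclidean_space"
  shows "\<exists>b\<in>Basis. norm y \<le> real DIM('a) * \<bar>y \<bullet> b\<bar>"
proof (rule ccontr)
  assume "\<not> ?thesis"
  hence h: "\<forall>b\<in>Basis. real DIM('a) * \<bar>y \<bullet> b\<bar> < norm y" by auto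
  have "(\<Sum>b\<in>Basis. real DIM('a) * \<bar>y \<bullet> b\<bar>) < (\<Sum>b\<in>(Basis::'a set). norm y)"
    by (rule sum_strict_mono) (use h in auto)
  hence "real DIM('a) * (\<Sum>b\<in>Basis. \<bar>y \<bullet> b\<bar>) < real DIM('a) * norm y"
    by (simp add: sum_distrib_left)
  hence "(\<Sum>b\<in>Basis. \<bar>y \<bullet> b\<bar>) < norm y" by simp
  with norm_le_l1[of y] show False by simp
qed

lemma exp_norm_le:
  fixes y :: "'a::euclidean_space"
  assumes "c \<ge> 0"
  shows "exp (c * norm y) \<le> (\<Sum>b\<in>Basis. exp ((c * DIM('a)) * (y \<bullet> b)) + exp (- (c * DIM('a)) * (y \<bullet> b)))"
proof -
  obtain b where b: "b \<in> Basis" "norm y \<le> real DIM('a) * \<bar>y \<bullet> b\<bar>"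
    using exists_big_coord by blast
  have "exp (c * norm y) \<le> exp (c * (real DIM('a) * \<bar>y \<bullet> b\<bar>))"
    using b assms by (simp add: mult_left_mono)
  also have "\<dots> \<le> exp ((c * DIM('a)) * (y \<bullet> b)) + exp (- (c * DIM('a)) * (y \<bullet> b))"
    by (cases "y \<bullet> b \<ge> 0") (auto simp: abs_if algebra_simps add_increasing add_increasing2)
  also have "\<dots> \<le> (\<Sum>b\<in>Basis. exp ((c * DIM('a)) * (y \<bullet> b)) + exp (- (c * DIM('a)) * (y \<bullet> b)))"
    by (rule member_le_sum) (use b in auto)
  finally show ?thesis .
qed

lemma integrable_exp_norm:
  fixes g :: "'a::euclidean_space \<Rightarrow> real"
  assumes gm: "g \<in> borel_measurable lborel" and gnn: "\<And>y. g y \<ge> 0"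
    and int: "\<And>w. integrable lborel (\<lambda>y. g y * exp (w \<bullet> y))"
    and c: "c \<ge> 0"
  shows "integrable lborel (\<lambda>y. g y * exp (a \<bullet> y) * exp (c * norm y))"
proof -
  let ?C = "c * DIM('a)"
  have "integrable lborel (\<lambda>y. \<Sum>b\<in>Basis. g y * exp ((a + ?C *\<^sub>R b) \<bullet> y) + g y * exp ((a - ?C *\<^sub>R b) \<bullet> y))"
    by (intro Bochner_Integration.integrable_sum Bochner_Integration.integrable_add int)
  then show ?thesis
  proof (rule Bochner_Integration.integrable_bound)
    show "(\<lambda>y. g y * exp (a \<bullet> y) * exp (c * norm y)) \<in> borel_measurable lborel"
      using gm by measurable
    show "AE y in lborel. norm (g y * exp (a \<bullet> y) * exp (c * norm y))
        \<le> norm (\<Sum>b\<in>Basis. g y * exp ((a + ?C *\<^sub>R b) \<bullet> y) + g y * exp ((a - ?C *\<^sub>R b) \<bullet> y))"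
    proof (intro AE_I2)
      fix y
      have eq: "(\<Sum>b\<in>Basis. g y * exp ((a + ?C *\<^sub>R b) \<bullet> y) + g y * exp ((a - ?C *\<^sub>R b) \<bullet> y))
          = g y * exp (a \<bullet> y) * (\<Sum>b\<in>Basis. exp ((c * DIM('a)) * (y \<bullet> b)) + exp (- (c * DIM('a)) * (y \<bullet> b)))"
        by (simp add: sum_distrib_left inner_add_left inner_diff_left exp_add exp_diff
              exp_minus inner_commute algebra_simps divide_inverse)
      have "g y * exp (a \<bullet> y) * exp (c * norm y) \<le> g y * exp (a \<bullet> y) * (\<Sum>b\<in>Basis. exp ((c * DIM('a)) * (y \<bullet> b)) + exp (- (c * DIM('a)) * (y \<bullet> b)))"
        using exp_norm_le[OF c, of y] gnn[of y] by (intro mult_left_mono) auto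
      moreover have "0 \<le> g y * exp (a \<bullet> y) * exp (c * norm y)" using gnn[of y] by simp
      ultimately show "norm (g y * exp (a \<bullet> y) * exp (c * norm y))
        \<le> norm (\<Sum>b\<in>Basis. g y * exp ((a + ?C *\<^sub>R b) \<bullet> y) + g y * exp ((a - ?C *\<^sub>R b) \<bullet> y))"
        unfolding eq by simp
    qed
  qed
qed



lemma exp_rem_bound: "\<bar>exp t - 1 - t\<bar> \<le> t\<^sup>2 * exp \<bar>t::real\<bar>"
proof -
  have a: "exp t - 1 - t \<ge> 0" using exp_ge_add_one_self[of t] by linarith
  have "exp (-t) \<ge> 1 - t" using exp_ge_add_one_self[of "-t"] by linarith
  hence "exp t * exp (-t) \<ge> exp t * (1 - t)" by (intro mult_left_mono) auto
  hence b: "1 \<ge> exp t * (1 - t)" by (simp add: exp_minus)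
  have "exp t - 1 - t \<le> t * (exp t - 1)" using b by (simp add: algebra_simps)
  also have "\<dots> \<le> t\<^sup>2 * exp \<bar>t\<bar>"
  proof (cases "t \<ge> 0")
    case True
    have "exp t - 1 \<le> t * exp t" using b by (simp add: algebra_simps)
    hence "t * (exp t - 1) \<le> t * (t * exp t)" using True by (intro mult_left_mono) auto
    then show ?thesis using True by (simp add: power2_eq_square mult.assoc)
  next
    case False
    have c: "1 - exp t \<le> - t" using exp_ge_add_one_self[of t] by linarith
    have "t * (exp t - 1) = (-t) * (1 - exp t)" by (simp add: algebra_simps)
    also have "\<dots> \<le> (-t) * (-t)" using c False by (intro mult_left_mono) auto
    also have "\<dots> \<le> t\<^sup>2 * exp \<bar>t\<bar>"
      using mult_left_mono[of 1 "exp \<bar>t\<bar>" "t\<^sup>2"] by (simp add: power2_eq_square)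
    finally show ?thesis .
  qed
  finally show ?thesis using a by simp
qed

lemma sq_exp_le: "(t::real) \<ge> 0 \<Longrightarrow> t\<^sup>2 \<le> 4 * exp t"
proof -
  assume t: "t \<ge> 0"
  have "t / 2 \<le> exp (t/2)" using exp_ge_add_one_self[of "t/2"] by linarith
  hence "(t/2)\<^sup>2 \<le> (exp (t/2))\<^sup>2" using t by (intro power_mono) auto
  also have "(exp (t/2))\<^sup>2 = exp t" by (simp add: power2_eq_square exp_add[symmetric])
  finally show ?thesis by (simp add: power_divide)
qed

locale lapl =
  fixes g :: "'a::euclidean_space \<Rightarrow> real"
  assumes gm: "g \<in> borel_measurable lborel" and gnn: "\<And>y. g y \<ge> 0"
    and int: "\<And>w. integrable lborel (\<lambda>y. g y * exp (w \<bullet> y))"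
begin

definition J where "J w = (\<integral>y. g y * exp (w \<bullet> y) \<partial>lborel)"
definition V where "V w = (\<integral>y. (g y * exp (w \<bullet> y)) *\<^sub>R y \<partial>lborel)"

lemma int_en: "c \<ge> 0 \<Longrightarrow> integrable lborel (\<lambda>y. g y * exp (a \<bullet> y) * exp (c * norm y))"
  by (rule integrable_exp_norm[OF gm gnn int])

lemma int_V: "integrable lborel (\<lambda>y. (g y * exp (a \<bullet> y)) *\<^sub>R y)"
proof (rule Bochner_Integration.integrable_bound[OF int_en[of 1 a]])
  show "(\<lambda>y. (g y * exp (a \<bullet> y)) *\<^sub>R y) \<in> borel_measurable lborel" using gm by measurable
  show "AE y in lborel. norm ((g y * exp (a \<bullet> y)) *\<^sub>R y) \<le> norm (g y * exp (a \<bullet> y) * exp (1 * norm y))"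
  proof (intro AE_I2)
    fix y :: 'a
    have "norm y \<le> exp (norm y)" using exp_ge_add_one_self[of "norm y"] by linarith
    hence "g y * exp (a \<bullet> y) * norm y \<le> g y * exp (a \<bullet> y) * exp (norm y)"
      using gnn[of y] by (intro mult_left_mono) auto
    thus "norm ((g y * exp (a \<bullet> y)) *\<^sub>R y) \<le> norm (g y * exp (a \<bullet> y) * exp (1 * norm y))"
      using gnn[of y] by simp
  qed
qed simp

lemma DJ_eq: "(\<integral>y. g y * exp (a \<bullet> y) * (v \<bullet> y) \<partial>lborel) = v \<bullet> V a"
proof -
  have "(\<integral>y. g y * exp (a \<bullet> y) * (v \<bullet> y) \<partial>lborel) = (\<integral>y. v \<bullet> ((g y * exp (a \<bullet> y)) *\<^sub>R y) \<partial>lborel)"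
    by (simp add: inner_scaleR_right)
  also have "\<dots> = v \<bullet> V a" unfolding V_def using int_V by (subst integral_inner_right) auto
  finally show ?thesis .
qed

lemma int_lin: "integrable lborel (\<lambda>y. g y * exp (a \<bullet> y) * (v \<bullet> y))"
proof -
  have "integrable lborel (\<lambda>y. v \<bullet> ((g y * exp (a \<bullet> y)) *\<^sub>R y))"
    using int_V by (intro integrable_inner_right)
  thus ?thesis by (simp add: inner_scaleR_right)
qed

lemma J_deriv: "(J has_derivative (\<lambda>v. v \<bullet> V a)) (at a)"
  unfolding has_derivative_at_alt
proof (intro conjI allI impI)
  show "bounded_linear (\<lambda>v. v \<bullet> V a)" by (rule bounded_linear_inner_left)
  fix e :: real assume e: "e > 0"
  define M where "M = (\<integral>y. g y * exp (a \<bullet> y) * (4 * exp (2 * norm y)) \<partial>lborel)"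
  have intM: "integrable lborel (\<lambda>y. g y * exp (a \<bullet> y) * (4 * exp (2 * norm y)))"
  proof -
    have "integrable lborel (\<lambda>y. 4 * (g y * exp (a \<bullet> y) * exp (2 * norm y)))"
      using int_en[of 2 a] by (intro integrable_mult_right) auto
    moreover have "(\<lambda>y. 4 * (g y * exp (a \<bullet> y) * exp (2 * norm y))) = (\<lambda>y. g y * exp (a \<bullet> y) * (4 * exp (2 * norm y)))"
      by (auto simp: fun_eq_iff)
    ultimately show ?thesis by simp
  qed
  have M0: "M \<ge> 0" unfolding M_def using gnn by (intro integral_nonneg_AE) auto
  define d where "d = min 1 (e / (M + 1))"
  have d0: "d > 0" using e M0 by (simp add: d_def)
  show "\<exists>d>0. \<forall>y. norm (y - a) < d \<longrightarrow> norm (J y - J a - (y - a) \<bullet> V a) \<le> e * norm (y - a)"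
  proof (intro exI[of _ d] conjI allI impI d0)
    fix z assume z: "norm (z - a) < d"
    define v where "v = z - a"
    have v1: "norm v \<le> 1" using z by (simp add: v_def d_def)
    have eqz: "z = a + v" by (simp add: v_def)
    have ea: "\<And>y. g y * exp (z \<bullet> y) = g y * exp (a \<bullet> y) * exp (v \<bullet> y)"
      by (simp add: eqz inner_add_left exp_add)
    have "J z - J a - v \<bullet> V a =
        (\<integral>y. g y * exp (z \<bullet> y) \<partial>lborel) - (\<integral>y. g y * exp (a \<bullet> y) \<partial>lborel)
          - (\<integral>y. g y * exp (a \<bullet> y) * (v \<bullet> y) \<partial>lborel)"
      by (simp add: J_def DJ_eq)
    also have "\<dots> = (\<integral>y. g y * exp (z \<bullet> y) - g y * exp (a \<bullet> y) - g y * exp (a \<bullet> y) * (v \<bullet> y) \<partial>lborel)"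
      using int int_lin by simp
    also have "\<dots> = (\<integral>y. g y * exp (a \<bullet> y) * (exp (v \<bullet> y) - 1 - v \<bullet> y) \<partial>lborel)"
      by (intro Bochner_Integration.integral_cong) (auto simp: ea right_diff_distrib)
    finally have remeq: "J z - J a - v \<bullet> V a = (\<integral>y. g y * exp (a \<bullet> y) * (exp (v \<bullet> y) - 1 - v \<bullet> y) \<partial>lborel)" .
    have intR0: "integrable lborel (\<lambda>y. g y * exp (z \<bullet> y) - g y * exp (a \<bullet> y) - g y * exp (a \<bullet> y) * (v \<bullet> y))"
      by (intro Bochner_Integration.integrable_diff int int_lin)
    have intR: "integrable lborel (\<lambda>y. g y * exp (a \<bullet> y) * (exp (v \<bullet> y) - 1 - v \<bullet> y))"
    proof -
      have "\<And>y. g y * exp (z \<bullet> y) - g y * exp (a \<bullet> y) - g y * exp (a \<bullet> y) * (v \<bullet> y)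
          = g y * exp (a \<bullet> y) * (exp (v \<bullet> y) - 1 - v \<bullet> y)" by (simp add: ea right_diff_distrib)
      with intR0 show ?thesis by simp
    qed
    have pw: "\<bar>g y * exp (a \<bullet> y) * (exp (v \<bullet> y) - 1 - v \<bullet> y)\<bar>
        \<le> (norm v)\<^sup>2 * (g y * exp (a \<bullet> y) * (4 * exp (2 * norm y)))" for y
    proof -
      have c1: "\<bar>v \<bullet> y\<bar> \<le> norm v * norm y" by (rule Cauchy_Schwarz_ineq2)
      hence c2: "\<bar>v \<bullet> y\<bar> \<le> norm y" using v1
        by (meson mult_left_le_one_le norm_ge_zero order_trans)
      have "\<bar>exp (v \<bullet> y) - 1 - v \<bullet> y\<bar> \<le> (v \<bullet> y)\<^sup>2 * exp \<bar>v \<bullet> y\<bar>" by (rule exp_rem_bound)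
      also have "\<dots> \<le> (norm v * norm y)\<^sup>2 * exp (norm y)"
      proof (intro mult_mono)
        have "\<bar>v \<bullet> y\<bar>\<^sup>2 \<le> (norm v * norm y)\<^sup>2" using c1 by (intro power_mono) auto
        thus "(v \<bullet> y)\<^sup>2 \<le> (norm v * norm y)\<^sup>2" by simp
        show "exp \<bar>v \<bullet> y\<bar> \<le> exp (norm y)" using c2 by simp
      qed auto
      also have "\<dots> = (norm v)\<^sup>2 * ((norm y)\<^sup>2 * exp (norm y))" by (simp add: power_mult_distrib)
      also have "\<dots> \<le> (norm v)\<^sup>2 * (4 * exp (norm y) * exp (norm y))"
        using sq_exp_le[of "norm y"] by (intro mult_left_mono) auto
      also have "\<dots> = (norm v)\<^sup>2 * (4 * exp (2 * norm y))" by (simp add: exp_add[symmetric])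
      finally have "\<bar>exp (v \<bullet> y) - 1 - v \<bullet> y\<bar> \<le> (norm v)\<^sup>2 * (4 * exp (2 * norm y))" .
      hence "g y * exp (a \<bullet> y) * \<bar>exp (v \<bullet> y) - 1 - v \<bullet> y\<bar> \<le> g y * exp (a \<bullet> y) * ((norm v)\<^sup>2 * (4 * exp (2 * norm y)))"
        using gnn[of y] by (intro mult_left_mono) auto
      moreover have "\<bar>g y * exp (a \<bullet> y) * (exp (v \<bullet> y) - 1 - v \<bullet> y)\<bar> = g y * exp (a \<bullet> y) * \<bar>exp (v \<bullet> y) - 1 - v \<bullet> y\<bar>"
        using gnn[of y] by (simp add: abs_mult)
      ultimately show ?thesis by (simp add: ac_simps)
    qed
    have "norm (J z - J a - v \<bullet> V a) \<le> (\<integral>y. \<bar>g y * exp (a \<bullet> y) * (exp (v \<bullet> y) - 1 - v \<bullet> y)\<bar> \<partial>lborel)"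
      unfolding remeq real_norm_def by (rule integral_abs_bound)
    also have "\<dots> \<le> (\<integral>y. (norm v)\<^sup>2 * (g y * exp (a \<bullet> y) * (4 * exp (2 * norm y))) \<partial>lborel)"
      using pw intM intR by (intro integral_mono) auto
    also have "\<dots> = (norm v)\<^sup>2 * M" by (simp add: M_def)
    also have "\<dots> \<le> norm v * (d * M)"
    proof -
      have "norm v * M \<le> d * M" using z M0 by (intro mult_right_mono) (auto simp: v_def)
      hence "norm v * (norm v * M) \<le> norm v * (d * M)" by (intro mult_left_mono) auto
      thus ?thesis by (simp add: power2_eq_square mult.assoc)
    qed
    also have "\<dots> \<le> norm v * e"
    proof (intro mult_left_mono)
      have "d * M \<le> e / (M + 1) * M" using M0 by (intro mult_right_mono) (auto simp: d_def)
      also have "\<dots> \<le> e" using M0 e by (simp add: field_simps)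
      finally show "d * M \<le> e" .
    qed auto
    finally show "norm (J z - J a - (z - a) \<bullet> V a) \<le> e * norm (z - a)"
      by (simp add: v_def mult.commute)
  qed
qed

end


context lapl begin

lemma J_pos:
  assumes gp: "\<And>y. g y > 0"
  shows "J w > 0"
proof -
  have nn: "J w \<ge> 0" unfolding J_def using gnn by (intro integral_nonneg_AE) auto
  have nAE: "\<not> (AE (y::'a) in lborel. False)"
  proof -
    have "ae_filter lborel \<noteq> bot" using ae_filter_eq_bot_iff[of lborel] by simp
    thus ?thesis using trivial_limit_def[of "ae_filter lborel"] by metis
  qed
  have "J w \<noteq> 0"
  proof
    assume "J w = 0"
    hence "AE y in lborel. g y * exp (w \<bullet> y) = 0"
      unfolding J_def using gnn int by (subst (asm) integral_nonneg_eq_0_iff_AE) auto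
    moreover have "g y * exp (w \<bullet> y) \<noteq> 0" for y using gp[of y] by simp
    ultimately have "AE (y::'a) in lborel. False" by (simp add: eventually_mono)
    with nAE show False by simp
  qed
  with nn show ?thesis by simp
qed

lemma tangent:
  assumes gp: "\<And>y. g y > 0"
  shows "ln (J b) - ln (J a) \<ge> ((b - a) \<bullet> V a) / J a"
proof -
  define c where "c = ((b - a) \<bullet> V a) / J a"
  have Ja: "J a > 0" and Jb: "J b > 0" using J_pos gp by auto
  have pw: "exp c * (g y * exp (a \<bullet> y) + g y * exp (a \<bullet> y) * ((b - a) \<bullet> y) - c * (g y * exp (a \<bullet> y)))
      \<le> g y * exp (b \<bullet> y)" for y
  proof -
    have "exp ((b - a) \<bullet> y - c) \<ge> 1 + ((b - a) \<bullet> y - c)" by (rule exp_ge_add_one_self)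
    hence "exp c * exp ((b - a) \<bullet> y - c) \<ge> exp c * (1 + ((b - a) \<bullet> y - c))" by (intro mult_left_mono) auto
    hence "exp ((b - a) \<bullet> y) \<ge> exp c * (1 + ((b - a) \<bullet> y - c))" by (simp add: exp_diff)
    hence "g y * exp (a \<bullet> y) * exp ((b - a) \<bullet> y) \<ge> g y * exp (a \<bullet> y) * (exp c * (1 + ((b - a) \<bullet> y - c)))"
      using gnn[of y] by (intro mult_left_mono) auto
    moreover have "exp (a \<bullet> y) * exp ((b - a) \<bullet> y) = exp (b \<bullet> y)"
      by (simp add: exp_add[symmetric] inner_diff_left)
    ultimately have "g y * exp (b \<bullet> y) \<ge> g y * exp (a \<bullet> y) * (exp c * (1 + ((b - a) \<bullet> y - c)))"
      by (simp add: mult.assoc)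
    moreover have "g y * exp (a \<bullet> y) * (exp c * (1 + ((b - a) \<bullet> y - c)))
       = exp c * (g y * exp (a \<bullet> y) + g y * exp (a \<bullet> y) * ((b - a) \<bullet> y) - c * (g y * exp (a \<bullet> y)))"
      by (simp add: algebra_simps)
    ultimately show ?thesis by simp
  qed
  have i1: "integrable lborel (\<lambda>y. exp c * (g y * exp (a \<bullet> y) + g y * exp (a \<bullet> y) * ((b - a) \<bullet> y) - c * (g y * exp (a \<bullet> y))))"
    by (intro integrable_mult_right Bochner_Integration.integrable_diff Bochner_Integration.integrable_add int int_lin)
  have "exp c * (J a + (b - a) \<bullet> V a - c * J a)
      = (\<integral>y. exp c * (g y * exp (a \<bullet> y) + g y * exp (a \<bullet> y) * ((b - a) \<bullet> y) - c * (g y * exp (a \<bullet> y))) \<partial>lborel)"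
    using int int_lin by (simp add: J_def DJ_eq[symmetric])
  also have "\<dots> \<le> J b" unfolding J_def using pw i1 int by (intro integral_mono) auto
  finally have "exp c * (J a + (b - a) \<bullet> V a - c * J a) \<le> J b" .
  moreover have "J a + (b - a) \<bullet> V a - c * J a = J a" using Ja by (simp add: c_def)
  ultimately have "exp c * J a \<le> J b" by simp
  hence "ln (exp c * J a) \<le> ln (J b)" using Ja Jb by (subst ln_le_cancel_iff) auto
  hence "c + ln (J a) \<le> ln (J b)" using Ja by (simp add: ln_mult)
  thus ?thesis by (simp add: c_def)
qed

end


theorem mainTheorem8:
  fixes U\<mu> U\<nu> \<phi> \<psi> :: "'a::euclidean_space \<Rightarrow> real"
    and \<beta>\<mu> \<alpha>\<nu> L T :: real
  assumes C2_mu: "C2 U\<mu>" and C2_nu: "C2 U\<nu>"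
    and prob_mu: "(\<integral>\<^sup>+x. ennreal (exp (- U\<mu> x)) \<partial>lborel) = 1"
    and prob_nu: "(\<integral>\<^sup>+x. ennreal (exp (- U\<nu> x)) \<partial>lborel) = 1"
    and moment_mu: "integrable lborel (\<lambda>x. (norm x)\<^sup>2 * exp (- U\<mu> x))"
    and entropy_mu: "integrable lborel (\<lambda>x. exp (- U\<mu> x) * ln (exp (- U\<mu> x)))"
    and beta_pos: "\<beta>\<mu> > 0"
    and hess_mu: "hessian_upper_bound U\<mu> \<beta>\<mu>"
    and alpha_pos: "\<alpha>\<nu> > 0" and L_pos: "L > 0"
    and kappa_nu: "\<forall>r>0. ereal (\<alpha>\<nu> - fL L r / r) \<le> kappa U\<nu> r"
    and T_pos: "T > 0"
    and sol: "schroedinger_solution T U\<mu> U\<nu> \<phi> \<psi>"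
  shows "(\<forall>x. \<psi> differentiable (at x)) \<and>
         (\<forall>r>0. ereal (\<alpha>\<nu> - 1 / T - fL L r / r) \<le> kappa \<psi> r)"
proof -
  from sol have int2: "\<And>x. integrable lborel (\<lambda>y. exp (- \<phi> y) * exp (- (norm (y - x))\<^sup>2 / (2 * T)))"
    and psi_eq: "\<And>x. \<psi> x = U\<nu> x + ln (heat T (\<lambda>y. exp (- \<phi> y)) x)"
    unfolding schroedinger_solution_def by blast+
  from C2_nu obtain DU :: "'a \<Rightarrow> ('a \<Rightarrow>\<^sub>L real)" and D2U :: "'a \<Rightarrow> ('a \<Rightarrow>\<^sub>L ('a \<Rightarrow>\<^sub>L real))" where
    dU0: "\<forall>x. (U\<nu> has_derivative blinfun_apply (DU x)) (at x)"
    and "\<forall>x. (DU has_derivative blinfun_apply (D2U x)) (at x)" and "continuous_on UNIV D2U"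
    unfolding C2_def by metis
  have dU: "\<And>x. (U\<nu> has_derivative blinfun_apply (DU x)) (at x)" using dU0 by blast
  define g where "g y = exp (- \<phi> y) * exp (- (norm y)\<^sup>2 / (2 * T))" for y
  have Ksplit: "exp (- (norm (y - x))\<^sup>2 / (2 * T))
      = exp (- (norm y)\<^sup>2 / (2 * T)) * exp ((x /\<^sub>R T) \<bullet> y) * exp (- (norm x)\<^sup>2 / (2 * T))" for x y :: 'a
  proof -
    have n: "(norm (y - x))\<^sup>2 = (norm y)\<^sup>2 - 2 * (x \<bullet> y) + (norm x)\<^sup>2"
      by (simp add: power2_norm_eq_inner inner_diff_left inner_diff_right inner_commute)
    have "- (norm (y - x))\<^sup>2 / (2 * T) = - (norm y)\<^sup>2 / (2 * T) + (x /\<^sub>R T) \<bullet> y + - (norm x)\<^sup>2 / (2 * T)"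
      unfolding n using T_pos by (simp add: field_simps)
    note e = this
    show ?thesis unfolding e exp_add by (rule refl)
  qed
  have gm: "g \<in> borel_measurable lborel"
    using borel_measurable_integrable[OF int2[of 0]] unfolding g_def[abs_def] by simp
  have gpos: "\<And>y. g y > 0" by (simp add: g_def)
  have gint: "integrable lborel (\<lambda>y. g y * exp (w \<bullet> y))" for w
  proof -
    define x where "x = T *\<^sub>R w"
    have xw: "x /\<^sub>R T = w" using T_pos by (simp add: x_def)
    have "integrable lborel (\<lambda>y. exp ((norm x)\<^sup>2 / (2 * T)) * (exp (- \<phi> y) * exp (- (norm (y - x))\<^sup>2 / (2 * T))))"
      using int2[of x] by (rule integrable_mult_right)
    moreover have "exp ((norm x)\<^sup>2 / (2 * T)) * (exp (- \<phi> y) * exp (- (norm (y - x))\<^sup>2 / (2 * T)))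
        = g y * exp (w \<bullet> y)" for y
    proof -
      have "exp ((norm x)\<^sup>2 / (2 * T)) * exp (- (norm x)\<^sup>2 / (2 * T)) = 1"
        by (simp add: exp_add[symmetric])
      thus ?thesis unfolding Ksplit xw g_def by (simp add: algebra_simps)
    qed
    ultimately show ?thesis by (metis (no_types, lifting) Bochner_Integration.integrable_cong)
  qed
  interpret L: lapl g using gm gpos gint by unfold_locales (auto simp: less_imp_le)
  define c0 where "c0 = (2 * pi * T) powr (- (real DIM('a) / 2))"
  have c0: "c0 > 0" using T_pos by (simp add: c0_def)
  have heat_eq: "heat T (\<lambda>y. exp (- \<phi> y)) x = c0 * (exp (- (norm x)\<^sup>2 / (2 * T)) * L.J (x /\<^sub>R T))" for x
  proof -
    have "(\<lambda>y. exp (- \<phi> y) * exp (- (norm (y - x))\<^sup>2 / (2 * T)))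
        = (\<lambda>y. exp (- (norm x)\<^sup>2 / (2 * T)) * (g y * exp ((x /\<^sub>R T) \<bullet> y)))"
      unfolding Ksplit g_def by (auto simp: fun_eq_iff algebra_simps)
    thus ?thesis unfolding heat_def L.J_def c0_def by simp
  qed
  have Jpos: "\<And>w. L.J w > 0" using L.J_pos gpos by auto
  have psi_form: "\<psi> = (\<lambda>x. U\<nu> x + (ln c0 + (- (1 / (2 * T)) * (x \<bullet> x) + ln (L.J (x /\<^sub>R T)))))"
  proof
    fix x
    show "\<psi> x = U\<nu> x + (ln c0 + (- (1 / (2 * T)) * (x \<bullet> x) + ln (L.J (x /\<^sub>R T))))"
      unfolding psi_eq heat_eq using c0 Jpos[of "x /\<^sub>R T"]
      by (simp add: ln_mult power2_norm_eq_inner)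
  qed
  define D\<psi> where "D\<psi> x h = DU x h + (0 + (- (1 / (2 * T)) * (x \<bullet> h + h \<bullet> x) + (h /\<^sub>R T) \<bullet> L.V (x /\<^sub>R T) * inverse (L.J (x /\<^sub>R T))))" for x h
  have dpsi: "(\<psi> has_derivative D\<psi> x) (at x)" for x
  proof -
    have s: "((\<lambda>x. x /\<^sub>R T) has_derivative (\<lambda>h. h /\<^sub>R T)) (at x)"
      by (rule bounded_linear.has_derivative[OF bounded_linear_scaleR_right has_derivative_ident])
    have dJ: "((\<lambda>x. L.J (x /\<^sub>R T)) has_derivative (\<lambda>h. (h /\<^sub>R T) \<bullet> L.V (x /\<^sub>R T))) (at x)"
      using diff_chain_at[OF s L.J_deriv[of "x /\<^sub>R T"]] by (simp add: o_def)
    have dln: "((\<lambda>x. ln (L.J (x /\<^sub>R T))) has_derivative (\<lambda>h. (h /\<^sub>R T) \<bullet> L.V (x /\<^sub>R T) * inverse (L.J (x /\<^sub>R T)))) (at x)"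
      by (rule DERIV_compose_FDERIV[OF DERIV_ln[OF Jpos] dJ])
    have dn: "((\<lambda>x. x \<bullet> x) has_derivative (\<lambda>h. x \<bullet> h + h \<bullet> x)) (at x)"
      by (rule has_derivative_inner[OF has_derivative_ident has_derivative_ident])
    show ?thesis unfolding psi_form D\<psi>_def
      by (intro has_derivative_add dU has_derivative_const has_derivative_mult_right dn dln)
  qed
  have fd\<psi>: "frechet_derivative \<psi> (at x) = D\<psi> x" for x using frechet_derivative_at[OF dpsi] by simp
  have fdU: "frechet_derivative U\<nu> (at x) = blinfun_apply (DU x)" for x using frechet_derivative_at[OF dU] by simp
  have W: "(v /\<^sub>R T) \<bullet> L.V (x /\<^sub>R T) * inverse (L.J (x /\<^sub>R T)) - (v /\<^sub>R T) \<bullet> L.V (z /\<^sub>R T) * inverse (L.J (z /\<^sub>R T)) \<ge> 0"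
    if "v = x - z" for x z v
  proof -
    have t1: "ln (L.J (z /\<^sub>R T)) - ln (L.J (x /\<^sub>R T)) \<ge> ((z /\<^sub>R T - x /\<^sub>R T) \<bullet> L.V (x /\<^sub>R T)) / L.J (x /\<^sub>R T)"
      using L.tangent gpos by blast
    have t2: "ln (L.J (x /\<^sub>R T)) - ln (L.J (z /\<^sub>R T)) \<ge> ((x /\<^sub>R T - z /\<^sub>R T) \<bullet> L.V (z /\<^sub>R T)) / L.J (z /\<^sub>R T)"
      using L.tangent gpos by blast
    have e1: "z /\<^sub>R T - x /\<^sub>R T = - (v /\<^sub>R T)" and e2: "x /\<^sub>R T - z /\<^sub>R T = v /\<^sub>R T"
      using that by (auto simp: algebra_simps)
    show ?thesis using t1 t2 unfolding e1 e2 by (simp add: divide_inverse)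
  qed
  show ?thesis
  proof (intro conjI allI impI)
    fix x show "\<psi> differentiable (at x)" using dpsi by (auto simp: differentiable_def)
  next
    fix r :: real assume r: "r > 0"
    show "ereal (\<alpha>\<nu> - 1 / T - fL L r / r) \<le> kappa \<psi> r"
      unfolding kappa_def
    proof (rule INF_greatest)
      fix p :: "'a \<times> 'a" assume p: "p \<in> {(x, y). norm (x - y) = r}"
      obtain x z where pxz: "p = (x, z)" by (cases p)
      define v where "v = x - z"
      have nv: "norm v = r" using p by (simp add: pxz v_def)
      have "kappa U\<nu> r \<le> ereal ((frechet_derivative U\<nu> (at x) v - frechet_derivative U\<nu> (at z) v) / (norm v)\<^sup>2)"
        unfolding kappa_def using p by (intro INF_lower2[of p]) (auto simp: pxz v_def)
      with kappa_nu r have kU: "\<alpha>\<nu> - fL L r / r \<le> (DU x v - DU z v) / r\<^sup>2"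
        by (simp add: fdU nv) (meson ereal_less_eq(3) order.trans)
      have vv: "x \<bullet> v + v \<bullet> x - (z \<bullet> v + v \<bullet> z) = 2 * r\<^sup>2"
      proof -
        have "x \<bullet> v + v \<bullet> x - (z \<bullet> v + v \<bullet> z) = 2*((x - z) \<bullet> v)"
          by (simp add: inner_diff_left inner_diff_right inner_commute)
        also have "\<dots> = 2 * r\<^sup>2" using nv by (simp add: v_def[symmetric] power2_norm_eq_inner[symmetric])
        finally show ?thesis .
      qed
      note Wv = W[OF refl, of x z]
      have "D\<psi> x v - D\<psi> z v = (DU x v - DU z v) - r\<^sup>2 / T
           + ((v /\<^sub>R T) \<bullet> L.V (x /\<^sub>R T) * inverse (L.J (x /\<^sub>R T)) - (v /\<^sub>R T) \<bullet> L.V (z /\<^sub>R T) * inverse (L.J (z /\<^sub>R T)))"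
      proof -
        have "- (1 / (2 * T)) * (x \<bullet> v + v \<bullet> x) - - (1 / (2 * T)) * (z \<bullet> v + v \<bullet> z) = - r\<^sup>2 / T"
          using vv T_pos by (simp add: field_simps)
        thus ?thesis unfolding D\<psi>_def by (simp add: algebra_simps)
      qed
      moreover define Wt where "Wt = (v /\<^sub>R T) \<bullet> L.V (x /\<^sub>R T) * inverse (L.J (x /\<^sub>R T)) - (v /\<^sub>R T) \<bullet> L.V (z /\<^sub>R T) * inverse (L.J (z /\<^sub>R T))"
      ultimately have eqA: "D\<psi> x v - D\<psi> z v = (DU x v - DU z v) - r\<^sup>2 / T + Wt" by simp
      have Wt0: "Wt \<ge> 0" using Wv unfolding Wt_def v_def .
      have r2: "r\<^sup>2 > 0" using r by simp
      have "(D\<psi> x v - D\<psi> z v) / r\<^sup>2 = (DU x v - DU z v) / r\<^sup>2 - (r\<^sup>2 / T) / r\<^sup>2 + Wt / r\<^sup>2"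
        unfolding eqA by (simp add: add_divide_distrib diff_divide_distrib)
      also have "(r\<^sup>2 / T) / r\<^sup>2 = 1 / T" using r2 by simp
      finally have "(D\<psi> x v - D\<psi> z v) / r\<^sup>2 = (DU x v - DU z v) / r\<^sup>2 - 1 / T + Wt / r\<^sup>2" .
      moreover have "Wt / r\<^sup>2 \<ge> 0" using Wt0 r2 by simp
      ultimately have "(D\<psi> x v - D\<psi> z v) / r\<^sup>2 \<ge> (DU x v - DU z v) / r\<^sup>2 - 1 / T" by linarith
      with kU have "\<alpha>\<nu> - 1 / T - fL L r / r \<le> (D\<psi> x v - D\<psi> z v) / r\<^sup>2" by linarith
      thus "ereal (\<alpha>\<nu> - 1 / T - fL L r / r) \<le> ereal ((frechet_derivative \<psi> (at (fst p)) (fst p - snd p)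
              - frechet_derivative \<psi> (at (snd p)) (fst p - snd p)) / (norm (fst p - snd p))\<^sup>2)"
        by (simp add: pxz fd\<psi> v_def[symmetric] nv)
    qed
  qed
qed

end
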